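(* Let $k\ge1$ and let $A_k$ be a $k$-atom with $n$ vertices. Then \[ \lambda_1(A_k) \geq \frac{k\sqrt{k}}{4\sqrt{n}} - 2. \]
   Context: $\lambda_1(H)$ denotes the largest eigenvalue of the adjacency matrix of a graph $H$. $k$-atoms are defined recursively: $K_1$ is the only $1$-atom. A graph $H$ is a $(k+1)$-atom if its vertices can be partitioned into an independent set $I$ and a set inducing a $k$-atom $A_k$ such that each vertex of $A_k$ has exactly one neighbor in $I$ and each vertex of $I$ has at least one neighbor in $A_k$. *)

theory Defs
  imports Complex_Main
begin

definition simple_graph :: "'a set \<Rightarrow> ('a \<Rightarrow> 'a \<Rightarrow> bool) \<Rightarrow> bool" where
  "simple_graph V E \<longleftrightarrow> finite V \<and> (\<forall>u w. E u w \<longrightarrow> u \<in> V \<and> w \<in> V)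
     \<and> (\<forall>u w. E u w \<longrightarrow> E w u) \<and> (\<forall>u. \<not> E u u)"

definition induced :: "('a \<Rightarrow> 'a \<Rightarrow> bool) \<Rightarrow> 'a set \<Rightarrow> 'a \<Rightarrow> 'a \<Rightarrow> bool" where
  "induced E B = (\<lambda>u w. E u w \<and> u \<in> B \<and> w \<in> B)"

text \<open>Eigenvalues of the adjacency matrix (A x)(v) = sum over neighbours u of v of x(u),
vectors indexed by V. The adjacency matrix is real symmetric, so all its
eigenvalues are real and have real eigenvectors.\<close>
definition adj_eigenvalue :: "'a set \<Rightarrow> ('a \<Rightarrow> 'a \<Rightarrow> bool) \<Rightarrow> real \<Rightarrow> bool" where
  "adj_eigenvalue V E \<mu> \<longleftrightarrow> (\<exists>x :: 'a \<Rightarrow> real. (\<exists>v\<in>V. x v \<noteq> 0) \<and>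
      (\<forall>v\<in>V. (\<Sum>u\<in>{u\<in>V. E v u}. x u) = \<mu> * x v))"

definition lambda1 :: "'a set \<Rightarrow> ('a \<Rightarrow> 'a \<Rightarrow> bool) \<Rightarrow> real" where
  "lambda1 V E = Max {\<mu>. adj_eigenvalue V E \<mu>}"

inductive atom :: "nat \<Rightarrow> 'a set \<Rightarrow> ('a \<Rightarrow> 'a \<Rightarrow> bool) \<Rightarrow> bool" where
  K1: "\<not> E v v \<Longrightarrow> atom 1 {v} E"
| step: "\<lbrakk> I \<inter> B = {}; I \<union> B = V;
           \<forall>u\<in>I. \<forall>w\<in>I. \<not> E u w;
           atom k B (induced E B);
           \<forall>b\<in>B. card {i\<in>I. E b i} = 1;
           \<forall>i\<in>I. \<exists>b\<in>B. E i b \<rbrakk> \<Longrightarrow> atom (Suc k) V E"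

end

theory Submission
  imports Defs "HOL-Analysis.Analysis"
begin


definition ip :: "'a set \<Rightarrow> ('a \<Rightarrow> real) \<Rightarrow> ('a \<Rightarrow> real) \<Rightarrow> real" where
  "ip V x y = (\<Sum>v\<in>V. x v * y v)"
definition Ax :: "'a set \<Rightarrow> ('a \<Rightarrow> 'a \<Rightarrow> bool) \<Rightarrow> ('a \<Rightarrow> real) \<Rightarrow> 'a \<Rightarrow> real" where
  "Ax V E x v = (\<Sum>u\<in>{u\<in>V. E v u}. x u)"
definition bf :: "'a set \<Rightarrow> ('a \<Rightarrow> 'a \<Rightarrow> bool) \<Rightarrow> ('a \<Rightarrow> real) \<Rightarrow> ('a \<Rightarrow> real) \<Rightarrow> real" where
  "bf V E x y = ip V x (Ax V E y)"

lemma ip_sym: "ip V x y = ip V y x"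
  unfolding ip_def by (simp add: mult.commute)

lemma ip_lin_left: "ip V (\<lambda>v. x v + t * y v) z = ip V x z + t * ip V y z"
  unfolding ip_def by (simp add: sum.distrib sum_distrib_left algebra_simps)

lemma ip_lin_right: "ip V z (\<lambda>v. x v + t * y v) = ip V z x + t * ip V z y"
  unfolding ip_def by (simp add: sum.distrib sum_distrib_left algebra_simps)

lemma Ax_lin: "Ax V E (\<lambda>v. x v + t * y v) w = Ax V E x w + t * Ax V E y w"
  unfolding Ax_def by (simp add: sum.distrib sum_distrib_left)

lemma bf_lin_left: "bf V E (\<lambda>v. x v + t * y v) z = bf V E x z + t * bf V E y z"
  unfolding bf_def by (rule ip_lin_left)

lemma bf_lin_right: "bf V E z (\<lambda>v. x v + t * y v) = bf V E z x + t * bf V E z y"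
  unfolding bf_def Ax_lin by (rule ip_lin_right)

lemma bf_expand: "bf V E x y = (\<Sum>v\<in>V. \<Sum>u\<in>V. if E v u then x v * y u else 0)" if "finite V"
proof -
  have "bf V E x y = (\<Sum>v\<in>V. x v * (\<Sum>u\<in>V. if E v u then y u else 0))"
    unfolding bf_def ip_def Ax_def using that by (simp add: sum.inter_filter)
  also have "\<dots> = (\<Sum>v\<in>V. \<Sum>u\<in>V. if E v u then x v * y u else 0)"
    by (auto simp: sum_distrib_left intro!: sum.cong)
  finally show ?thesis .
qed

lemma bf_sym:
  assumes "finite V" "\<forall>u w. E u w \<longrightarrow> E w u"
  shows "bf V E x y = bf V E y x"
proof -
  have "bf V E x y = (\<Sum>v\<in>V. \<Sum>u\<in>V. if E v u then x v * y u else 0)"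
    by (rule bf_expand[OF assms(1)])
  also have "\<dots> = (\<Sum>u\<in>V. \<Sum>v\<in>V. if E v u then x v * y u else 0)"
    by (rule sum.swap)
  also have "\<dots> = (\<Sum>u\<in>V. \<Sum>v\<in>V. if E u v then y u * x v else 0)"
    using assms(2) by (intro sum.cong refl) (auto simp: mult.commute)
  also have "\<dots> = bf V E y x"
    by (rule bf_expand[OF assms(1), symmetric])
  finally show ?thesis .
qed

lemma quad_zero:
  fixes a c :: real
  assumes "a \<ge> 0" "\<And>t. 2 * t * a + t^2 * c \<le> 0"
  shows "a = 0"
proof (rule ccontr)
  assume "a \<noteq> 0"
  hence ap: "a > 0" using assms(1) by simp
  define t where "t = a / (\<bar>c\<bar> + 1)"
  have d: "\<bar>c\<bar> + 1 > 0" by simp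
  have "2 * t * a + t^2 * c \<le> 0" by (rule assms(2))
  hence "(2 * t * a + t^2 * c) * (\<bar>c\<bar> + 1)^2 \<le> 0"
    by (simp add: mult_nonpos_nonneg)
  moreover have "(2 * t * a + t^2 * c) * (\<bar>c\<bar> + 1)^2 = a^2 * (2 * (\<bar>c\<bar> + 1) + c)"
  proof -
    have ts: "t * (\<bar>c\<bar> + 1) = a" unfolding t_def using d by simp
    have "(2 * t * a + t^2 * c) * (\<bar>c\<bar> + 1)^2 = 2 * a * (t * (\<bar>c\<bar> + 1)) * (\<bar>c\<bar> + 1) + (t * (\<bar>c\<bar> + 1))^2 * c"
      by (simp add: power2_eq_square algebra_simps)
    also have "\<dots> = a^2 * (2 * (\<bar>c\<bar> + 1) + c)" unfolding ts by (simp add: power2_eq_square algebra_simps)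
    finally show ?thesis .
  qed
  moreover have "a^2 * (2 * (\<bar>c\<bar> + 1) + c) > 0"
    using ap by (intro mult_pos_pos) (simp_all add: abs_if)
  ultimately show False by linarith
qed

lemma ip_self_nonneg: "ip V x x \<ge> 0"
  unfolding ip_def by (simp add: sum_nonneg)

lemma ip_self_zero:
  assumes "finite V" "ip V x x = 0" "v \<in> V" shows "x v = 0"
proof -
  have "\<forall>v\<in>V. x v * x v = 0"
    using assms(2) sum_nonneg_eq_0_iff[OF assms(1), of "\<lambda>v. x v * x v"] unfolding ip_def by simp
  thus ?thesis using assms(3) by simp
qed

lemma ip_zero_left:
  assumes "\<forall>v\<in>V. x v = 0" shows "ip V x y = 0"
  unfolding ip_def using assms by simp

lemma bf_zero_left:
  assumes "\<forall>v\<in>V. x v = 0" shows "bf V E x y = 0"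
  unfolding bf_def using assms by (rule ip_zero_left)

lemma bf_scale: "bf V E (\<lambda>v. c * x v) (\<lambda>v. d * y v) = c * d * bf V E x y"
  unfolding bf_def ip_def Ax_def by (simp add: sum_distrib_left[symmetric] mult_ac)

lemma ip_scale: "ip V (\<lambda>v. c * x v) (\<lambda>v. d * y v) = c * d * ip V x y"
  unfolding ip_def by (simp add: sum_distrib_left algebra_simps)

lemma bf_cong: "(\<And>v. v \<in> V \<Longrightarrow> x v = x' v) \<Longrightarrow> (\<And>v. v \<in> V \<Longrightarrow> y v = y' v) \<Longrightarrow> bf V E x y = bf V E x' y'"
  unfolding bf_def ip_def Ax_def by (intro sum.cong refl) auto

lemma ip_cong: "(\<And>v. v \<in> V \<Longrightarrow> x v = x' v) \<Longrightarrow> (\<And>v. v \<in> V \<Longrightarrow> y v = y' v) \<Longrightarrow> ip V x y = ip V x' y'"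
  unfolding ip_def by (intro sum.cong refl) auto

lemma normalize:
  assumes fin: "finite V" and pos: "ip V z z > 0"
  defines "z' \<equiv> (\<lambda>v. if v \<in> V then z v / sqrt (ip V z z) else 0)"
  shows "ip V z' z' = 1" "bf V E z' z' = bf V E z z / ip V z z"
    "\<And>v. v \<in> V \<Longrightarrow> \<bar>z' v\<bar> \<le> 1" "\<And>v. v \<notin> V \<Longrightarrow> z' v = 0"
proof -
  define c where "c = 1 / sqrt (ip V z z)"
  have cc: "c * c = 1 / ip V z z" using pos unfolding c_def by (simp add: real_sqrt_mult[symmetric])
  have eq: "\<And>v. v \<in> V \<Longrightarrow> z' v = c * z v" unfolding z'_def c_def by simp
  have "ip V z' z' = ip V (\<lambda>v. c * z v) (\<lambda>v. c * z v)" by (rule ip_cong) (simp_all add: eq)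
  also have "\<dots> = 1" using pos by (simp add: ip_scale cc)
  finally show ip1: "ip V z' z' = 1" .
  have "bf V E z' z' = bf V E (\<lambda>v. c * z v) (\<lambda>v. c * z v)" by (rule bf_cong) (simp_all add: eq)
  also have "\<dots> = bf V E z z / ip V z z" by (simp add: bf_scale cc)
  finally show "bf V E z' z' = bf V E z z / ip V z z" .
  show "\<And>v. v \<notin> V \<Longrightarrow> z' v = 0" unfolding z'_def by simp
  fix v assume v: "v \<in> V"
  have "z' v * z' v \<le> ip V z' z'"
    unfolding ip_def by (rule member_le_sum[OF v _ fin]) simp
  hence "(z' v)^2 \<le> 1^2" using ip1 by (simp add: power2_eq_square)
  thus "\<bar>z' v\<bar> \<le> 1" using abs_le_square_iff by (metis abs_one)
qed

lemma exists_eig: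
  assumes fin: "finite V" and sym: "\<forall>u w. E u w \<longrightarrow> E w u" and pos: "ip V y y > 0"
  shows "\<exists>\<mu>. adj_eigenvalue V E \<mu> \<and> bf V E y y \<le> \<mu> * ip V y y"
proof -
  define S :: "'a \<Rightarrow> real set" where "S = (\<lambda>v. if v \<in> V then {-1..1} else {0})"
  define K where "K = PiE UNIV S \<inter> (\<lambda>x. ip V x x) -` {1}"
  have cip: "continuous_on UNIV (\<lambda>x::'a\<Rightarrow>real. ip V x x)"
    unfolding ip_def by (intro continuous_intros continuous_on_product_coordinates)
  have cbf: "continuous_on UNIV (\<lambda>x::'a\<Rightarrow>real. bf V E x x)"
    unfolding bf_def ip_def Ax_def by (intro continuous_intros continuous_on_product_coordinates)
  have compK: "compact K"
  proof -
    have "compactin (product_topology (\<lambda>i. euclidean) UNIV) (PiE UNIV S)"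
      by (subst compactin_PiE) (auto simp: S_def)
    hence "compact (PiE UNIV S)" by (simp add: euclidean_product_topology)
    moreover have "closed ((\<lambda>x. ip V x x) -` {1})" by (rule closed_vimage[OF closed_singleton cip])
    ultimately show ?thesis unfolding K_def by (rule compact_Int_closed)
  qed
  have inK: "(\<lambda>v. if v \<in> V then z v / sqrt (ip V z z) else 0) \<in> K" if "ip V z z > 0" for z
  proof -
    define zz where "zz = (\<lambda>v. if v \<in> V then z v / sqrt (ip V z z) else 0)"
    have h: "\<And>v. v \<in> V \<Longrightarrow> \<bar>zz v\<bar> \<le> 1" "\<And>v. v \<notin> V \<Longrightarrow> zz v = 0" "ip V zz zz = 1"
      using normalize[OF fin that] unfolding zz_def by blast+
    have "zz i \<in> S i" for i
    proof (cases "i \<in> V")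
      case True
      then show ?thesis using h(1)[OF True] unfolding S_def by (simp add: abs_le_iff)
    next
      case False
      then show ?thesis using h(2)[OF False] unfolding S_def by simp
    qed
    hence "zz \<in> K" unfolding K_def using h(3) by (simp add: PiE_iff)
    thus ?thesis unfolding zz_def .
  qed
  have "K \<noteq> {}" using inK[OF pos] by blast
  then obtain x where xK: "x \<in> K" and xmax: "\<And>w. w \<in> K \<Longrightarrow> bf V E w w \<le> bf V E x x"
    using continuous_attains_sup[OF compK _ continuous_on_subset[OF cbf]] by blast
  define \<mu> where "\<mu> = bf V E x x"
  have x1: "ip V x x = 1" using xK unfolding K_def by simp
  have bound: "bf V E z z \<le> \<mu> * ip V z z" for z
  proof (cases "ip V z z = 0")
    case True
    hence "\<forall>v\<in>V. z v = 0" using ip_self_zero[OF fin] by blast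
    thus ?thesis using True by (simp add: bf_zero_left)
  next
    case False
    hence p: "ip V z z > 0" using ip_self_nonneg[of V z] by linarith
    have "bf V E z z / ip V z z \<le> \<mu>"
      using xmax[OF inK[OF p]] normalize(2)[OF fin p, of E] unfolding \<mu>_def by simp
    thus ?thesis using p by (simp add: pos_divide_le_eq mult.commute)
  qed
  define r where "r = (\<lambda>v. Ax V E x v + (- \<mu>) * x v)"
  have rr: "ip V r r = bf V E r x - \<mu> * ip V r x"
  proof -
    have "ip V r (\<lambda>v. Ax V E x v + (- \<mu>) * x v) = ip V r (\<lambda>v. Ax V E x v) + (- \<mu>) * ip V r x"
      by (rule ip_lin_right)
    from this[unfolded r_def[symmetric]] show ?thesis unfolding bf_def by simp
  qed
  have quad: "2 * t * ip V r r + t^2 * (bf V E r r - \<mu> * ip V r r) \<le> 0" for t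
  proof -
    define z where "z = (\<lambda>v. x v + t * r v)"
    have "bf V E z z = bf V E x x + t * bf V E x r + t * (bf V E r x + t * bf V E r r)"
      unfolding z_def bf_lin_left bf_lin_right by simp
    also have "\<dots> = \<mu> + 2 * t * bf V E r x + t^2 * bf V E r r"
      using bf_sym[OF fin sym, of x r] unfolding \<mu>_def by (simp add: power2_eq_square algebra_simps)
    finally have b: "bf V E z z = \<mu> + 2 * t * bf V E r x + t^2 * bf V E r r" .
    have "ip V z z = ip V x x + t * ip V x r + t * (ip V r x + t * ip V r r)"
      unfolding z_def ip_lin_left ip_lin_right by simp
    also have "\<dots> = 1 + 2 * t * ip V r x + t^2 * ip V r r"
      unfolding ip_sym[of V x r] x1 by (simp add: power2_eq_square algebra_simps)
    finally have i: "ip V z z = 1 + 2 * t * ip V r x + t^2 * ip V r r" .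
    have "bf V E z z \<le> \<mu> * ip V z z" by (rule bound)
    thus ?thesis unfolding b i rr by (simp add: algebra_simps)
  qed
  have "ip V r r = 0" by (rule quad_zero[OF ip_self_nonneg quad])
  hence r0: "\<And>v. v \<in> V \<Longrightarrow> r v = 0" using ip_self_zero[OF fin] by blast
  have "\<exists>v\<in>V. x v \<noteq> 0"
  proof (rule ccontr)
    assume "\<not> ?thesis"
    hence "ip V x x = 0" by (simp add: ip_zero_left)
    thus False using x1 by simp
  qed
  moreover have "\<forall>v\<in>V. (\<Sum>u\<in>{u\<in>V. E v u}. x u) = \<mu> * x v"
    using r0 unfolding r_def Ax_def by simp
  ultimately have "adj_eigenvalue V E \<mu>" unfolding adj_eigenvalue_def by blast
  moreover have "bf V E y y \<le> \<mu> * ip V y y" by (rule bound)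
  ultimately show ?thesis by blast
qed



lemma atom_claim:
  assumes "atom k V E" "finite V" "\<forall>u w. E u w \<longrightarrow> E w u"
  shows "1 \<le> k \<and> (\<forall>m. 1 \<le> m \<and> m \<le> k \<longrightarrow>
           (\<exists>X\<subseteq>V. m \<le> card X \<and> (\<forall>x\<in>X. k - m \<le> card {w\<in>V-X. E x w})))"
  using assms
proof (induction rule: atom.induct)
  case (K1 E v)
  show ?case
  proof (intro conjI allI impI)
    fix m :: nat assume "1 \<le> m \<and> m \<le> 1"
    hence "m = 1" by simp
    thus "\<exists>X\<subseteq>{v}. m \<le> card X \<and> (\<forall>x\<in>X. 1 - m \<le> card {w\<in>{v}-X. E x w})"
      by (intro exI[of _ "{v}"]) auto
  qed simp
next
  case (step I B V E k)
  have finV: "finite V" by fact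
  have finB: "finite B" and finI: "finite I" using step.hyps(2) finV by auto
  have symB: "\<forall>u w. induced E B u w \<longrightarrow> induced E B w u"
    using step.prems(2) unfolding induced_def by blast
  have IH: "1 \<le> k \<and> (\<forall>m. 1 \<le> m \<and> m \<le> k \<longrightarrow>
           (\<exists>X\<subseteq>B. m \<le> card X \<and> (\<forall>x\<in>X. k - m \<le> card {w\<in>B-X. induced E B x w})))"
    using step.IH finB symB by blast
  show ?case
  proof (intro conjI allI impI)
    fix m assume m: "1 \<le> m \<and> m \<le> Suc k"
    show "\<exists>X\<subseteq>V. m \<le> card X \<and> (\<forall>x\<in>X. Suc k - m \<le> card {w\<in>V-X. E x w})"
    proof (cases "m = Suc k")
      case True
      from IH obtain X0 where X0: "X0 \<subseteq> B" "k \<le> card X0" by blast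
      have cB: "k \<le> card B" using X0 card_mono[OF finB X0(1)] by linarith
      hence "B \<noteq> {}" using IH by auto
      then obtain b where b: "b \<in> B" by blast
      have "card {i\<in>I. E b i} = 1" using step.hyps(5) b by blast
      hence "{i\<in>I. E b i} \<noteq> {}" by (metis card.empty zero_neq_one)
      hence "I \<noteq> {}" by blast
      hence "card I \<ge> 1" using finI by (simp add: Suc_le_eq card_gt_0_iff)
      moreover have "card V = card I + card B"
        using step.hyps(1,2) finI finB card_Un_disjoint by blast
      ultimately have "m \<le> card V" using True cB by simp
      thus ?thesis using True by (intro exI[of _ V]) auto
    next
      case False
      hence "1 \<le> m \<and> m \<le> k" using m by simp
      with IH obtain X where X: "X \<subseteq> B" "m \<le> card X"
        "\<forall>x\<in>X. k - m \<le> card {w\<in>B-X. induced E B x w}" by blast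
      have "X \<subseteq> V" using X(1) step.hyps(2) by blast
      moreover have "Suc k - m \<le> card {w\<in>V-X. E x w}" if x: "x \<in> X" for x
      proof -
        have xB: "x \<in> B" using x X(1) by blast
        have A: "{w\<in>B-X. induced E B x w} \<union> {i\<in>I. E x i} \<subseteq> {w\<in>V-X. E x w}"
          using step.hyps(1,2) X(1) unfolding induced_def by blast
        have D: "{w\<in>B-X. induced E B x w} \<inter> {i\<in>I. E x i} = {}"
          using step.hyps(1) by blast
        have "card ({w\<in>B-X. induced E B x w} \<union> {i\<in>I. E x i}) =
              card {w\<in>B-X. induced E B x w} + card {i\<in>I. E x i}"
          using D finB finI by (intro card_Un_disjoint) auto
        also have "card {i\<in>I. E x i} = 1" using step.hyps(5) xB by blast
        finally have "card ({w\<in>B-X. induced E B x w} \<union> {i\<in>I. E x i}) \<ge> k - m + 1"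
          using X(3) x by simp
        moreover have "card ({w\<in>B-X. induced E B x w} \<union> {i\<in>I. E x i}) \<le> card {w\<in>V-X. E x w}"
          using A finV by (intro card_mono) auto
        ultimately show ?thesis using m False by linarith
      qed
      ultimately show ?thesis using X(2) by blast
    qed
  qed simp
qed

lemma ip_sum_right: "ip V w (\<lambda>u. \<Sum>\<mu>\<in>M. c \<mu> * f \<mu> u) = (\<Sum>\<mu>\<in>M. c \<mu> * ip V w (f \<mu>))"
  unfolding ip_def sum_distrib_left by (subst sum.swap) (simp add: algebra_simps)

lemma bessel:
  fixes e :: "real \<Rightarrow> 'a \<Rightarrow> real"
  assumes finM: "finite M"
    and orth: "\<And>\<mu> \<nu>. \<mu> \<in> M \<Longrightarrow> \<nu> \<in> M \<Longrightarrow> ip V (e \<mu>) (e \<nu>) = (if \<mu> = \<nu> then 1 else 0)"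
  shows "(\<Sum>\<mu>\<in>M. (ip V w (e \<mu>))^2) \<le> ip V w w"
proof -
  define c where "c = (\<lambda>\<mu>. ip V w (e \<mu>))"
  define p where "p = (\<lambda>u. \<Sum>\<mu>\<in>M. c \<mu> * e \<mu> u)"
  have wp: "ip V w p = (\<Sum>\<mu>\<in>M. c \<mu> * c \<mu>)"
    unfolding p_def ip_sum_right c_def ..
  have ep: "ip V (e \<mu>) p = c \<mu>" if "\<mu> \<in> M" for \<mu>
  proof -
    have "ip V (e \<mu>) p = (\<Sum>\<nu>\<in>M. c \<nu> * ip V (e \<mu>) (e \<nu>))"
      unfolding p_def ip_sum_right ..
    also have "\<dots> = (\<Sum>\<nu>\<in>M. if \<nu> = \<mu> then c \<nu> else 0)"
      using that orth by (intro sum.cong refl) auto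
    also have "\<dots> = c \<mu>" using finM that by simp
    finally show ?thesis .
  qed
  have pp: "ip V p p = (\<Sum>\<mu>\<in>M. c \<mu> * c \<mu>)"
  proof -
    have "ip V p p = (\<Sum>\<mu>\<in>M. c \<mu> * ip V p (e \<mu>))"
      by (subst (2) p_def) (rule ip_sum_right)
    also have "\<dots> = (\<Sum>\<mu>\<in>M. c \<mu> * c \<mu>)"
      using ep by (intro sum.cong refl) (simp add: ip_sym)
    finally show ?thesis .
  qed
  have "0 \<le> ip V (\<lambda>u. w u + (-1) * p u) (\<lambda>u. w u + (-1) * p u)" by (rule ip_self_nonneg)
  also have "\<dots> = ip V w w - 2 * ip V w p + ip V p p"
    unfolding ip_lin_left ip_lin_right using ip_sym[of V p w] by simp
  finally show ?thesis unfolding wp pp c_def by (simp add: power2_eq_square)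
qed

lemma Ax_scale: "Ax V E (\<lambda>v. c * x v) w = c * Ax V E x w"
  unfolding Ax_def by (simp add: sum_distrib_left)

lemma eig_card_bound:
  assumes fin: "finite V" and sym: "\<forall>u w. E u w \<longrightarrow> E w u"
    and finM: "finite M" and M: "\<And>\<mu>. \<mu> \<in> M \<Longrightarrow> adj_eigenvalue V E \<mu>"
  shows "card M \<le> card V"
proof -
  have "\<forall>\<mu>\<in>M. \<exists>x. (\<exists>v\<in>V. x v \<noteq> 0) \<and> (\<forall>v\<in>V. Ax V E x v = \<mu> * x v)"
    using M unfolding adj_eigenvalue_def Ax_def by blast
  then obtain x where x: "\<And>\<mu>. \<mu> \<in> M \<Longrightarrow> (\<exists>v\<in>V. x \<mu> v \<noteq> 0) \<and> (\<forall>v\<in>V. Ax V E (x \<mu>) v = \<mu> * x \<mu> v)"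
    by metis
  have xpos: "ip V (x \<mu>) (x \<mu>) > 0" if "\<mu> \<in> M" for \<mu>
  proof -
    from x[OF that] obtain v where v: "v \<in> V" "x \<mu> v \<noteq> 0" by blast
    have "ip V (x \<mu>) (x \<mu>) \<noteq> 0" using ip_self_zero[OF fin _ v(1)] v(2) by blast
    thus ?thesis using ip_self_nonneg[of V "x \<mu>"] by linarith
  qed
  define s where "s = (\<lambda>\<mu>. 1 / sqrt (ip V (x \<mu>) (x \<mu>)))"
  define e where "e = (\<lambda>\<mu> v. s \<mu> * x \<mu> v)"
  have e1: "ip V (e \<mu>) (e \<mu>) = 1" if "\<mu> \<in> M" for \<mu>
  proof -
    have "ip V (e \<mu>) (e \<mu>) = s \<mu> * s \<mu> * ip V (x \<mu>) (x \<mu>)"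
      unfolding e_def by (rule ip_scale)
    also have "s \<mu> * s \<mu> = 1 / ip V (x \<mu>) (x \<mu>)"
      using xpos[OF that] unfolding s_def by simp
    finally show ?thesis using xpos[OF that] by simp
  qed
  have eeig: "\<forall>v\<in>V. Ax V E (e \<mu>) v = \<mu> * e \<mu> v" if "\<mu> \<in> M" for \<mu>
    using x[OF that] unfolding e_def Ax_scale by simp
  have e0: "ip V (e \<mu>) (e \<nu>) = 0" if "\<mu> \<in> M" "\<nu> \<in> M" "\<mu> \<noteq> \<nu>" for \<mu> \<nu>
  proof -
    have "bf V E (e \<mu>) (e \<nu>) = \<nu> * ip V (e \<mu>) (e \<nu>)"
    proof -
      have "bf V E (e \<mu>) (e \<nu>) = ip V (e \<mu>) (\<lambda>v. \<nu> * e \<nu> v)"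
        unfolding bf_def by (rule ip_cong) (simp_all add: eeig[OF that(2)])
      also have "\<dots> = \<nu> * ip V (e \<mu>) (e \<nu>)"
        using ip_scale[of V 1 "e \<mu>" \<nu> "e \<nu>"] by simp
      finally show ?thesis .
    qed
    moreover have "bf V E (e \<nu>) (e \<mu>) = \<mu> * ip V (e \<nu>) (e \<mu>)"
    proof -
      have "bf V E (e \<nu>) (e \<mu>) = ip V (e \<nu>) (\<lambda>v. \<mu> * e \<mu> v)"
        unfolding bf_def by (rule ip_cong) (simp_all add: eeig[OF that(1)])
      also have "\<dots> = \<mu> * ip V (e \<nu>) (e \<mu>)"
        using ip_scale[of V 1 "e \<nu>" \<mu> "e \<mu>"] by simp
      finally show ?thesis .
    qed
    ultimately have "(\<mu> - \<nu>) * ip V (e \<mu>) (e \<nu>) = 0"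
      using bf_sym[OF fin sym, of "e \<mu>" "e \<nu>"] ip_sym[of V "e \<mu>" "e \<nu>"] by (simp add: algebra_simps)
    thus ?thesis using that(3) by simp
  qed
  have orth: "ip V (e \<mu>) (e \<nu>) = (if \<mu> = \<nu> then 1 else 0)" if "\<mu> \<in> M" "\<nu> \<in> M" for \<mu> \<nu>
    using e1 e0 that by auto
  have bv: "(\<Sum>\<mu>\<in>M. (e \<mu> v)^2) \<le> 1" if v: "v \<in> V" for v
  proof -
    define w where "w = (\<lambda>u. if u = v then 1 else (0::real))"
    have "ip V w (e \<mu>) = e \<mu> v" for \<mu>
    proof -
      have "ip V w (e \<mu>) = (\<Sum>u\<in>V. if u = v then e \<mu> u else 0)"
        unfolding ip_def by (rule sum.cong) (auto simp: w_def)
      thus ?thesis using fin v by simp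
    qed
    moreover have "ip V w w = 1" unfolding ip_def w_def using fin v by (simp add: if_distrib cong: if_cong)
    ultimately show ?thesis using bessel[OF finM orth, of w] by simp
  qed
  have "real (card M) = (\<Sum>\<mu>\<in>M. ip V (e \<mu>) (e \<mu>))" using e1 by simp
  also have "\<dots> = (\<Sum>v\<in>V. \<Sum>\<mu>\<in>M. (e \<mu> v)^2)"
    unfolding ip_def by (subst sum.swap) (simp add: power2_eq_square)
  also have "\<dots> \<le> (\<Sum>v\<in>V. 1)" by (intro sum_mono bv)
  also have "\<dots> = real (card V)" by simp
  finally show ?thesis by simp
qed

lemma eig_finite:
  assumes fin: "finite V" and sym: "\<forall>u w. E u w \<longrightarrow> E w u"
  shows "finite {\<mu>. adj_eigenvalue V E \<mu>}"
proof (rule ccontr)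
  assume "infinite {\<mu>. adj_eigenvalue V E \<mu>}"
  then obtain M where "finite M" "card M = Suc (card V)" "M \<subseteq> {\<mu>. adj_eigenvalue V E \<mu>}"
    using infinite_arbitrarily_large by blast
  with eig_card_bound[OF fin sym, of M] show False by auto
qed

theorem lemma5:
  fixes V :: "'a set" and E :: "'a \<Rightarrow> 'a \<Rightarrow> bool" and k n :: nat
  assumes "k \<ge> 1"
    and "simple_graph V E"
    and "atom k V E"
    and "n = card V"
  shows "lambda1 V E \<ge> real k * sqrt (real k) / (4 * sqrt (real n)) - 2"
proof -
  have fin: "finite V" and sym: "\<forall>u w. E u w \<longrightarrow> E w u" and noloop: "\<And>u. \<not> E u u"
    and inV: "\<And>u w. E u w \<Longrightarrow> u \<in> V \<and> w \<in> V"
    using assms(2) unfolding simple_graph_def by blast+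
  have claim: "\<And>m. 1 \<le> m \<Longrightarrow> m \<le> k \<Longrightarrow>
           (\<exists>X\<subseteq>V. m \<le> card X \<and> (\<forall>x\<in>X. k - m \<le> card {w\<in>V-X. E x w}))"
    using atom_claim[OF assms(3) fin sym] by blast
  have finS: "finite {\<mu>. adj_eigenvalue V E \<mu>}" by (rule eig_finite[OF fin sym])
  have lam: "bf V E y y \<le> lambda1 V E * ip V y y" if yp: "ip V y y > 0" for y
  proof -
    obtain \<mu> where mu: "adj_eigenvalue V E \<mu>" "bf V E y y \<le> \<mu> * ip V y y"
      using exists_eig[OF fin sym yp] by blast
    have "\<mu> \<le> lambda1 V E" unfolding lambda1_def using mu(1) finS by (intro Max_ge) auto
    hence "\<mu> * ip V y y \<le> lambda1 V E * ip V y y" using yp by (intro mult_right_mono) auto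
    thus ?thesis using mu(2) by linarith
  qed
  obtain X0 where "X0 \<subseteq> V" "1 \<le> card X0" using claim[of 1] assms(1) by blast
  hence "V \<noteq> {}" by auto
  then obtain v0 where v0: "v0 \<in> V" by blast
  have npos: "n \<ge> 1" using assms(4) fin v0 by (simp add: Suc_le_eq card_gt_0_iff; blast)
  have lam0: "0 \<le> lambda1 V E"
  proof -
    define y where "y = (\<lambda>u. if u = v0 then 1 else (0::real))"
    have "ip V y y = (\<Sum>u\<in>V. if u = v0 then 1 else 0)"
      unfolding ip_def by (rule sum.cong) (auto simp: y_def)
    hence ip1: "ip V y y = 1" using fin v0 by simp
    have "bf V E y y = 0" unfolding bf_expand[OF fin]
      by (intro sum.neutral ballI) (auto simp: y_def noloop)
    thus ?thesis using lam[of y] ip1 by simp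
  qed
  show ?thesis
  proof (cases "k = 1")
    case True
    have s1: "sqrt (real n) \<ge> 1" using npos by simp
    have "1 / (4 * sqrt (real n)) \<le> 1 / 4" using s1 by (intro divide_left_mono) auto
    hence "1 / (4 * sqrt (real n)) \<le> 2" by linarith
    thus ?thesis using True lam0 by simp
  next
    case False
    hence k2: "k \<ge> 2" using assms(1) by simp
    define m where "m = k div 2"
    have m1: "1 \<le> m" and mk: "m \<le> k" using k2 unfolding m_def by auto
    obtain X where X: "X \<subseteq> V" "m \<le> card X" "\<forall>x\<in>X. k - m \<le> card {w\<in>V-X. E x w}"
      using claim[OF m1 mk] by blast
    define Y where "Y = V - X"
    define a where "a = card X"
    define b where "b = card Y"
    have finX: "finite X" and finY: "finite Y" using X(1) fin unfolding Y_def by (auto intro: finite_subset)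
    have am: "m \<le> a" using X(2) unfolding a_def .
    hence "X \<noteq> {}" using m1 unfolding a_def by auto
    then obtain x0 where x0: "x0 \<in> X" by blast
    have "1 \<le> k - m" using k2 unfolding m_def by simp
    hence "1 \<le> card {w\<in>Y. E x0 w}" using X(3) x0 unfolding Y_def by fastforce
    hence "{w\<in>Y. E x0 w} \<noteq> {}" by (metis card.empty not_one_le_zero)
    hence "Y \<noteq> {}" by blast
    hence b1: "1 \<le> b" unfolding b_def using finY by (simp add: Suc_le_eq card_gt_0_iff)
    have bn: "b \<le> n" unfolding b_def assms(4) Y_def using fin by (intro card_mono) auto
    have a1: "1 \<le> a" using am m1 by simp
    define sa where "sa = sqrt (real a)"
    define sb where "sb = sqrt (real b)"
    have sa_pos: "sa > 0" and sb_pos: "sb > 0" using a1 b1 unfolding sa_def sb_def by auto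
    have saa: "sa * sa = real a" and sbb: "sb * sb = real b" unfolding sa_def sb_def by simp_all
    define e where "e = (\<Sum>x\<in>X. real (card {w\<in>Y. E x w}))"
    have ea: "e \<ge> real a * real (k - m)"
    proof -
      have "e \<ge> (\<Sum>x\<in>X. real (k - m))" unfolding e_def
        using X(3) unfolding Y_def by (intro sum_mono) simp
      thus ?thesis unfolding a_def by simp
    qed
    define y where "y = (\<lambda>u. if u \<in> X then sb else if u \<in> Y then sa else 0)"
    have VXY: "V = X \<union> Y" and XY: "X \<inter> Y = {}" using X(1) unfolding Y_def by auto
    have ipy: "ip V y y = 2 * real a * real b"
    proof -
      have "ip V y y = (\<Sum>u\<in>X. y u * y u) + (\<Sum>u\<in>Y. y u * y u)"
        unfolding ip_def VXY using finX finY XY by (rule sum.union_disjoint)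
      also have "(\<Sum>u\<in>X. y u * y u) = (\<Sum>u\<in>X. sb * sb)" by (rule sum.cong) (auto simp: y_def)
      also have "(\<Sum>u\<in>Y. y u * y u) = (\<Sum>u\<in>Y. sa * sa)" using XY by (intro sum.cong) (auto simp: y_def)
      finally show ?thesis unfolding saa sbb a_def b_def by simp
    qed
    define f where "f = (\<lambda>v u. if E v u then y v * y u else 0)"
    have fnn: "f v u \<ge> 0" for v u
      unfolding f_def y_def using sa_pos sb_pos by auto
    have fXY: "(\<Sum>x\<in>X. \<Sum>w\<in>Y. f x w) = sa * sb * e"
    proof -
      have "(\<Sum>x\<in>X. \<Sum>w\<in>Y. f x w) = (\<Sum>x\<in>X. \<Sum>w\<in>{w\<in>Y. E x w}. sa * sb)"
      proof (rule sum.cong[OF refl])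
        fix x assume x: "x \<in> X"
        have "(\<Sum>w\<in>Y. f x w) = (\<Sum>w\<in>Y. if E x w then sa * sb else 0)"
          using x XY by (intro sum.cong) (auto simp: f_def y_def)
        also have "\<dots> = (\<Sum>w\<in>{w\<in>Y. E x w}. sa * sb)" by (rule sum.inter_filter[OF finY, symmetric])
        finally show "(\<Sum>w\<in>Y. f x w) = (\<Sum>w\<in>{w\<in>Y. E x w}. sa * sb)" .
      qed
      also have "\<dots> = sa * sb * e" unfolding e_def by (simp add: sum_distrib_left mult.commute)
      finally show ?thesis .
    qed
    have fYX: "(\<Sum>v\<in>Y. \<Sum>u\<in>X. f v u) = (\<Sum>x\<in>X. \<Sum>w\<in>Y. f x w)"
    proof -
      have "(\<Sum>v\<in>Y. \<Sum>u\<in>X. f v u) = (\<Sum>u\<in>X. \<Sum>v\<in>Y. f v u)" by (rule sum.swap)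
      also have "\<dots> = (\<Sum>x\<in>X. \<Sum>w\<in>Y. f x w)"
        using sym by (intro sum.cong refl) (auto simp: f_def mult.commute)
      finally show ?thesis .
    qed
    have bfy: "bf V E y y \<ge> 2 * sa * sb * e"
    proof -
      have "bf V E y y = (\<Sum>v\<in>V. \<Sum>u\<in>V. f v u)" unfolding bf_expand[OF fin] f_def ..
      also have "\<dots> = (\<Sum>v\<in>X. \<Sum>u\<in>V. f v u) + (\<Sum>v\<in>Y. \<Sum>u\<in>V. f v u)"
        unfolding VXY using finX finY XY by (rule sum.union_disjoint)
      finally have eq: "bf V E y y = (\<Sum>v\<in>X. \<Sum>u\<in>V. f v u) + (\<Sum>v\<in>Y. \<Sum>u\<in>V. f v u)" .
      have "(\<Sum>v\<in>X. \<Sum>u\<in>Y. f v u) \<le> (\<Sum>v\<in>X. \<Sum>u\<in>V. f v u)"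
        using fin fnn unfolding Y_def by (intro sum_mono sum_mono2) auto
      moreover have "(\<Sum>v\<in>Y. \<Sum>u\<in>X. f v u) \<le> (\<Sum>v\<in>Y. \<Sum>u\<in>V. f v u)"
        using fin fnn X(1) by (intro sum_mono sum_mono2) auto
      ultimately show ?thesis unfolding eq using fXY fYX by linarith
    qed
    have "ip V y y > 0" unfolding ipy using a1 b1 by simp
    from lam[OF this] bfy have "2 * sa * sb * e \<le> lambda1 V E * (2 * real a * real b)"
      unfolding ipy by linarith
    moreover have "2 * sa * sb * (real a * real (k - m)) \<le> 2 * sa * sb * e"
      using ea sa_pos sb_pos by (intro mult_left_mono) auto
    ultimately have A: "2 * sa * sb * (real a * real (k - m)) \<le> lambda1 V E * (2 * real a * real b)"
      by linarith
    have e1: "2 * sa * sb * (real a * real (k - m)) = (2 * sa * sa * sb) * (sa * real (k - m))"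
      unfolding saa[symmetric] by (simp add: algebra_simps)
    have e2: "lambda1 V E * (2 * real a * real b) = (2 * sa * sa * sb) * (lambda1 V E * sb)"
      unfolding saa[symmetric] sbb[symmetric] by (simp add: algebra_simps)
    have pos4: "0 < 2 * sa * sa * sb" using sa_pos sb_pos by simp
    have l1: "sa * real (k - m) \<le> lambda1 V E * sb"
      using A unfolding e1 e2 by (rule mult_left_le_imp_le[OF _ pos4])
    have "sqrt (real m) * real (k - m) / sqrt (real n) \<le> sa * real (k - m) / sb"
    proof (rule frac_le)
      show "0 \<le> sa * real (k - m)" using sa_pos by simp
      show "sqrt (real m) * real (k - m) \<le> sa * real (k - m)"
        using am unfolding sa_def by (intro mult_right_mono) auto
      show "0 < sb" by (rule sb_pos)
      show "sb \<le> sqrt (real n)" using bn unfolding sb_def by simp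
    qed
    also have "\<dots> \<le> lambda1 V E" using l1 sb_pos by (simp add: divide_le_eq)
    finally have l2: "sqrt (real m) * real (k - m) / sqrt (real n) \<le> lambda1 V E" .
    have km: "real (k - m) \<ge> real k / 2" using mk unfolding m_def by (simp add: of_nat_diff)
    have "4 * real m \<ge> real k" using k2 unfolding m_def by linarith
    hence "sqrt (real m) \<ge> sqrt (real k / 4)" by simp
    moreover have "sqrt (real k / 4) = sqrt (real k) / 2" by (simp add: real_sqrt_divide)
    ultimately have sm: "sqrt (real m) \<ge> sqrt (real k) / 2" by simp
    have "real k * sqrt (real k) / 4 = (real k / 2) * (sqrt (real k) / 2)" by simp
    also have "\<dots> \<le> real (k - m) * sqrt (real m)"
      using km sm by (intro mult_mono) auto
    finally have "real k * sqrt (real k) / 4 \<le> sqrt (real m) * real (k - m)" by (simp add: mult.commute)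
    hence "real k * sqrt (real k) / 4 / sqrt (real n) \<le> sqrt (real m) * real (k - m) / sqrt (real n)"
      by (intro divide_right_mono) auto
    hence "real k * sqrt (real k) / (4 * sqrt (real n)) \<le> lambda1 V E" using l2 by simp
    thus ?thesis by simp
  qed
qed

end
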